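(* Let $m\ge1$, $0<x_1<x_2<\cdots<x_m<1$, and let $k_0\ge0$, $k_1\ge0$ with $k_0+k_1>0$. Define $G:[0,1]\times[0,1]\to\mathbb{R}$ by $$G(x,\zeta)=\begin{cases}\dfrac{(k_1\zeta-k_1-1)(k_0x+1)}{k_0+k_1+k_0k_1}, & 0\le x<\zeta,\\[2mm] \dfrac{(k_1x-k_1-1)(k_0\zeta+1)}{k_0+k_1+k_0k_1}, & \zeta\le x\le 1.\end{cases}$$ Then the $m\times m$ matrix $\big(G(x_i,x_j)\big)_{i,j=1}^m$ is invertible.
   Context: $G$ is the Green's function of the steady-state problem $\bar z_{xx}=f$ on $(0,1)$ with $\bar z_x(0)-k_0\bar z(0)=0$, $\bar z_x(1)+k_1\bar z(1)=0$. *)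

theory Defs
  imports Complex_Main "Jordan_Normal_Form.Matrix"
begin

text \<open>Green's function of z'' = f on (0,1) with Robin boundary conditions
 z'(0) - k0 z(0) = 0, z'(1) + k1 z(1) = 0.\<close>
definition green :: "real \<Rightarrow> real \<Rightarrow> real \<Rightarrow> real \<Rightarrow> real" where
  "green k0 k1 x \<zeta> =
     (if x < \<zeta> then (k1 * \<zeta> - k1 - 1) * (k0 * x + 1) / (k0 + k1 + k0 * k1)
      else (k1 * x - k1 - 1) * (k0 * \<zeta> + 1) / (k0 + k1 + k0 * k1))"

end

theory Submission
  imports Defs "Jordan_Normal_Form.Determinant"
begin

lemma units_invertible:
  fixes A :: "'a :: field mat"
  assumes A: "A \<in> carrier_mat n n" and U: "A \<in> Units (ring_mat TYPE('a) n b)"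
  shows "invertible_mat A"
proof -
  from U obtain B where B: "B \<in> carrier_mat n n" "A * B = 1\<^sub>m n" "B * A = 1\<^sub>m n"
    unfolding Units_def ring_mat_def by auto
  show ?thesis unfolding invertible_mat_def inverts_mat_def square_mat.simps
    using A B by auto
qed

lemma kernel_trivial:
  fixes m :: nat and x :: "nat \<Rightarrow> real" and k0 k1 :: real and w :: "nat \<Rightarrow> real"
  assumes x01: "\<And>i. i < m \<Longrightarrow> 0 < x i \<and> x i < 1"
    and mono: "\<And>i j. i < j \<Longrightarrow> j < m \<Longrightarrow> x i < x j"
    and k0: "k0 \<ge> 0" and k1: "k1 \<ge> 0" and kp: "k0 + k1 > 0"
    and eq: "\<And>i. i < m \<Longrightarrow> (\<Sum>j<m. green k0 k1 (x i) (x j) * w j) = 0"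
  shows "\<forall>i<m. w i = 0"
proof -
  define D where "D = k0 + k1 + k0 * k1"
  have Dpos: "D > 0" unfolding D_def using k0 k1 kp by (smt (verit) mult_nonneg_nonneg)
  define a where "a t = k0 * t + 1" for t :: real
  define b where "b t = k1 * t - k1 - 1" for t :: real
  define P where "P i = (\<Sum>j<Suc i. a (x j) * w j)" for i
  define Q where "Q i = (\<Sum>j\<in>{Suc i..<m}. b (x j) * w j)" for i
  have apos: "a (x i) > 0" if "i < m" for i
    using x01[OF that] k0 unfolding a_def by (smt (verit) mult_nonneg_nonneg)
  have bneg: "b (x i) < 0" if "i < m" for i
  proof -
    have "k1 * x i \<le> k1 * 1" using x01[OF that] k1 by (intro mult_left_mono) auto
    thus ?thesis unfolding b_def by linarith
  qed
  have main: "b (x i) * P i + a (x i) * Q i = 0" if im: "i < m" for i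
  proof -
    have split: "{..<m} = {..<Suc i} \<union> {Suc i..<m}" using im by auto
    have S: "(\<Sum>j<m. green k0 k1 (x i) (x j) * w j)
       = (\<Sum>j<Suc i. green k0 k1 (x i) (x j) * w j) + (\<Sum>j\<in>{Suc i..<m}. green k0 k1 (x i) (x j) * w j)"
      unfolding split by (rule sum.union_disjoint) auto
    have S1: "(\<Sum>j<Suc i. green k0 k1 (x i) (x j) * w j) = (\<Sum>j<Suc i. b (x i) * (a (x j) * w j) / D)"
    proof (rule sum.cong)
      fix j assume "j \<in> {..<Suc i}"
      hence "j \<le> i" by auto
      hence "\<not> x i < x j" using mono[of j i] im by (cases "j = i") auto
      thus "green k0 k1 (x i) (x j) * w j = b (x i) * (a (x j) * w j) / D"
        unfolding green_def a_def b_def D_def by simp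
    qed simp
    have S2: "(\<Sum>j\<in>{Suc i..<m}. green k0 k1 (x i) (x j) * w j) = (\<Sum>j\<in>{Suc i..<m}. a (x i) * (b (x j) * w j) / D)"
    proof (rule sum.cong)
      fix j assume "j \<in> {Suc i..<m}"
      hence "x i < x j" using mono[of i j] by auto
      thus "green k0 k1 (x i) (x j) * w j = a (x i) * (b (x j) * w j) / D"
        unfolding green_def a_def b_def D_def by simp
    qed simp
    have "(b (x i) * P i + a (x i) * Q i) / D = 0"
      using eq[OF im] S S1 S2 unfolding P_def Q_def
      by (simp add: sum_divide_distrib[symmetric] sum_distrib_left[symmetric] add_divide_distrib)
    thus ?thesis using Dpos by simp
  qed
  have Pz: "P i = 0" if im: "i < m" for i
  proof (cases "Suc i < m")
    case True
    have P1: "P (Suc i) = P i + a (x (Suc i)) * w (Suc i)" unfolding P_def by simp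
    have Q1: "Q i = b (x (Suc i)) * w (Suc i) + Q (Suc i)" unfolding Q_def
      using True by (simp add: sum.atLeast_Suc_lessThan)
    have e1: "b (x i) * P i + a (x i) * Q i = 0" using main[OF im] .
    have e2: "b (x (Suc i)) * P i + a (x (Suc i)) * Q i = 0"
      using main[OF True] P1 Q1 by (simp add: algebra_simps)
    have det: "b (x i) * a (x (Suc i)) - a (x i) * b (x (Suc i)) = - D * (x (Suc i) - x i)"
      unfolding a_def b_def D_def by (simp add: algebra_simps)
    have dne: "- D * (x (Suc i) - x i) \<noteq> 0" using Dpos mono[of i "Suc i"] True by simp
    have "P i * (b (x i) * a (x (Suc i)) - a (x i) * b (x (Suc i)))
        = a (x (Suc i)) * (b (x i) * P i + a (x i) * Q i) - a (x i) * (b (x (Suc i)) * P i + a (x (Suc i)) * Q i)"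
      by (simp add: algebra_simps)
    also have "\<dots> = 0" using e1 e2 by simp
    finally show ?thesis using det dne by simp
  next
    case False
    hence "Q i = 0" unfolding Q_def by simp
    hence "b (x i) * P i = 0" using main[OF im] by simp
    thus ?thesis using bneg[OF im] by simp
  qed
  show ?thesis
  proof (intro allI impI)
    fix i assume im: "i < m"
    show "w i = 0"
    proof (cases i)
      case 0
      have "P 0 = a (x 0) * w 0" unfolding P_def by simp
      thus ?thesis using Pz[OF im] apos[OF im] 0 by simp
    next
      case (Suc k)
      have "P (Suc k) = P k + a (x (Suc k)) * w (Suc k)" unfolding P_def by simp
      thus ?thesis using Pz[OF im] Pz[of k] apos[OF im] Suc im by simp
    qed
  qed
qed

theorem proposition2:
  fixes m :: nat and x :: "nat \<Rightarrow> real" and k0 k1 :: real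
  assumes "m \<ge> 1"
    and "\<And>i. i < m \<Longrightarrow> 0 < x i \<and> x i < 1"
    and "\<And>i j. i < j \<Longrightarrow> j < m \<Longrightarrow> x i < x j"
    and "k0 \<ge> 0" and "k1 \<ge> 0" and "k0 + k1 > 0"
  shows "invertible_mat (mat m m (\<lambda>(i, j). green k0 k1 (x i) (x j)))"
proof -
  let ?A = "mat m m (\<lambda>(i, j). green k0 k1 (x i) (x j))"
  have A: "?A \<in> carrier_mat m m" by simp
  have "det ?A \<noteq> 0"
  proof
    assume "det ?A = 0"
    then obtain v where v: "v \<in> carrier_vec m" "v \<noteq> 0\<^sub>v m" "?A *\<^sub>v v = 0\<^sub>v m"
      using det_0_iff_vec_prod_zero_field[OF A] by auto
    have "\<And>i. i < m \<Longrightarrow> (\<Sum>j<m. green k0 k1 (x i) (x j) * v $ j) = 0"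
    proof -
      fix i assume i: "i < m"
      have "(?A *\<^sub>v v) $ i = 0" using v(3) i by simp
      thus "(\<Sum>j<m. green k0 k1 (x i) (x j) * v $ j) = 0"
        using i v(1) by (simp add: scalar_prod_def lessThan_atLeast0)
    qed
    from kernel_trivial[OF assms(2,3,4,5,6) this]
    have "\<forall>i<m. v $ i = 0" .
    hence "v = 0\<^sub>v m" using v(1) by (intro eq_vecI) auto
    thus False using v(2) by simp
  qed
  thus ?thesis using units_invertible[OF A det_non_zero_imp_unit[OF A]] by blast
qed

end
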